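(* Let $k\geq3$ and let $\lambda,\mu\in\mathbb{C}$ satisfy $$\Big(\lambda+\frac{k-2}{3}\Big)\Big(\mu-\frac{k+1}{3}\Big)+\frac{1}{36}(k+1)(k-2)=0.$$ Define $W:\mathcal{D}^k_{\lambda,\mu}(S^1)\to\mathcal{F}_{\mu-\lambda-k+2}$ by $$W\Big(\sum_{i=0}^k a_i(x)\frac{d^i}{dx^i}\Big)=\big(\alpha_2\,a_k''(x)+\alpha_1\,a_{k-1}'(x)+\alpha_0\,a_{k-2}(x)\big)(dx)^{\mu-\lambda-k+2},$$ where $\alpha_2=\tfrac23 k(k-1)(k+3\lambda-2)^2$, $\alpha_1=2(k-1)(k+3\lambda-2)(2-2\lambda-k)$, $\alpha_0=3k^2+12\lambda k+12\lambda^2-11k-24\lambda+10$. Then $W$ is well defined (independent of the coordinate $x$) and $\mathrm{Diff}(S^1)$-equivariant.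
   Context: For $\lambda\in\mathbb{C}$, $\mathcal{F}_\lambda$ denotes the space of smooth $\lambda$-densities $\phi(x)(dx)^\lambda$ on $S^1$ with $\mathrm{Diff}(S^1)$-action $\rho^\lambda_{f^{-1}}:\phi(x)(dx)^\lambda\mapsto (f'(x))^\lambda\phi(f(x))(dx)^\lambda$. $\mathcal{D}^k_{\lambda,\mu}(S^1)$ is the space of linear differential operators $A=\sum_{i=0}^k a_i(x)\frac{d^i}{dx^i}:\mathcal{F}_\lambda\to\mathcal{F}_\mu$ of order $\le k$ (in a local coordinate $x$), with $\mathrm{Diff}(S^1)$-action $A\mapsto\rho^\mu_f\circ A\circ\rho^\lambda_{f^{-1}}$. *)

theory Defs
  imports "HOL-Analysis.Analysis"
begin

text \<open>The circle S^1 is modelled as R/Z: functions on S^1 are 1-periodic functions on the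
  real line, and the coordinate x is the standard one.\<close>

definition Dv :: "(real \<Rightarrow> complex) \<Rightarrow> real \<Rightarrow> complex" where
  "Dv \<phi> = (\<lambda>x. vector_derivative \<phi> (at x))"

text \<open>Smooth (C-infinity) complex-valued 1-periodic functions: lambda-densities in the
  coordinate x, and coefficients of differential operators.\<close>
definition smooth_per :: "(real \<Rightarrow> complex) \<Rightarrow> bool" where
  "smooth_per \<phi> \<longleftrightarrow> (\<forall>n x. (Dv ^^ n) \<phi> differentiable (at x)) \<and> (\<forall>x. \<phi> (x + 1) = \<phi> x)"

text \<open>Orientation preserving diffeomorphisms of S^1, via their lifts to R
  (smooth, f' > 0, f(x+1) = f(x) + 1).\<close>
definition diffeo_lift :: "(real \<Rightarrow> real) \<Rightarrow> bool" where
  "diffeo_lift f \<longleftrightarrow> (\<forall>n x. (deriv ^^ n) f differentiable (at x))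
      \<and> (\<forall>x. deriv f x > 0) \<and> (\<forall>x. f (x + 1) = f x + 1)"

text \<open>rho_dens l h phi = (h')^l (phi o h), i.e. the action rho^l_{h^{-1}} of the paper.\<close>
definition rho_dens :: "complex \<Rightarrow> (real \<Rightarrow> real) \<Rightarrow> (real \<Rightarrow> complex) \<Rightarrow> real \<Rightarrow> complex" where
  "rho_dens l h \<phi> = (\<lambda>x. (complex_of_real (deriv h x)) powr l * \<phi> (h x))"

definition diffop :: "nat \<Rightarrow> (nat \<Rightarrow> real \<Rightarrow> complex) \<Rightarrow> (real \<Rightarrow> complex) \<Rightarrow> real \<Rightarrow> complex" where
  "diffop k a \<phi> = (\<lambda>x. \<Sum>i\<le>k. a i x * (Dv ^^ i) \<phi> x)"

definition Wop :: "nat \<Rightarrow> complex \<Rightarrow> complex \<Rightarrow> (nat \<Rightarrow> real \<Rightarrow> complex) \<Rightarrow> real \<Rightarrow> complex" where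
  "Wop k l m a = (\<lambda>x.
     let kk = of_nat k :: complex;
         \<alpha>2 = 2/3 * kk * (kk - 1) * (kk + 3*l - 2)^2;
         \<alpha>1 = 2 * (kk - 1) * (kk + 3*l - 2) * (2 - 2*l - kk);
         \<alpha>0 = 3*kk^2 + 12*l*kk + 12*l^2 - 11*kk - 24*l + 10
     in \<alpha>2 * Dv (Dv (a k)) x + \<alpha>1 * Dv (a (k - 1)) x + \<alpha>0 * a (k - 2) x)"

end

theory Submission
  imports Defs "HOL-Computational_Algebra.Polynomial"
begin


definition fd :: "(real \<Rightarrow> real) \<Rightarrow> nat \<Rightarrow> real \<Rightarrow> real" where
  "fd f n = (deriv ^^ n) f"

lemma fd_deriv:
  assumes "diffeo_lift f"
  shows "(fd f n has_real_derivative fd f (Suc n) x) (at x)"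
proof -
  have "(deriv ^^ n) f differentiable (at x)" using assms unfolding diffeo_lift_def by blast
  then show ?thesis unfolding fd_def
    by (simp add: DERIV_deriv_iff_real_differentiable)
qed

lemma fd_0: "fd f 0 = f" by (simp add: fd_def)
lemma fd_1: "fd f 1 = deriv f" by (simp add: fd_def)

lemma f_deriv: "diffeo_lift f \<Longrightarrow> (f has_real_derivative deriv f x) (at x)"
  using fd_deriv[of f 0 x] by (simp add: fd_def)

lemma f_strict: assumes "diffeo_lift f" shows "strict_mono f"
proof (rule strict_monoI)
  fix a b :: real assume "a < b"
  then show "f a < f b"
  proof (rule DERIV_pos_imp_increasing)
    fix x show "\<exists>y. DERIV f x :> y \<and> y > 0" using f_deriv[OF assms, of x] assms by (auto simp: diffeo_lift_def)
  qed
qed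

lemma f_shift_nat: assumes "diffeo_lift f" shows "f (x + real n) = f x + real n"
proof (induction n)
  case (Suc n)
  have "f (x + real (Suc n)) = f ((x + real n) + 1)" by (simp add: algebra_simps)
  also have "\<dots> = f (x + real n) + 1" using assms by (simp add: diffeo_lift_def)
  finally show ?case using Suc by simp
qed simp

lemma f_surj: assumes "diffeo_lift f" shows "surj f"
proof -
  { fix y :: real
    define n where "n = nat (ceiling \<bar>y - f 0\<bar>)"
    have n: "\<bar>y - f 0\<bar> \<le> real n" unfolding n_def by linarith
    have a: "f (- real n) = f 0 - real n"
      using f_shift_nat[OF assms, of "- real n" n] by simp
    have b: "f (real n) = f 0 + real n"
      using f_shift_nat[OF assms, of 0 n] by simp
    have "\<exists>x. - real n \<le> x \<and> x \<le> real n \<and> f x = y"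
      apply (rule IVT)
      using a b n apply auto[3]
      using f_deriv[OF assms] DERIV_isCont by blast
    then have "y \<in> range f" by auto }
  then show ?thesis by auto
qed

lemma f_inj: "diffeo_lift f \<Longrightarrow> inj f"
  using f_strict strict_mono_imp_inj_on by blast

lemma f_inv_f: "diffeo_lift f \<Longrightarrow> f (inv f y) = y"
  using f_surj surj_f_inv_f by metis

lemma inv_f_f: "diffeo_lift f \<Longrightarrow> inv f (f x) = x"
  using f_inj inv_f_f by metis

lemma inv_deriv:
  assumes "diffeo_lift f"
  shows "(inv f has_real_derivative 1 / deriv f (inv f y)) (at y)"
proof -
  have c: "isCont (inv f) (f (inv f y))"
    by (rule isCont_inverse_function[where f=f and g="inv f" and d=1 and x="inv f y"])
       (simp, use assms inv_f_f in blast, use f_deriv[OF assms] DERIV_isCont in blast)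
  have "(inv f has_real_derivative inverse (deriv f (inv f y))) (at y)"
    apply (rule DERIV_inverse_function[where a="y-1" and b="y+1"])
    using assms f_deriv apply blast
    using assms apply (simp add: diffeo_lift_def less_imp_neq[symmetric])
      apply simp apply simp
    using f_inv_f assms apply blast
    using c f_inv_f assms by metis
  then show ?thesis by (simp add: divide_inverse)
qed

lemma V_pos: "diffeo_lift f \<Longrightarrow> deriv f x > 0" by (simp add: diffeo_lift_def)



definition cfd :: "(real \<Rightarrow> real) \<Rightarrow> nat \<Rightarrow> real \<Rightarrow> complex" where
  "cfd f n x = complex_of_real (fd f n x)"

definition iV :: "(real \<Rightarrow> real) \<Rightarrow> real \<Rightarrow> complex" where
  "iV f x = complex_of_real (1 / deriv f x)"

definition Pw :: "(real \<Rightarrow> real) \<Rightarrow> complex \<Rightarrow> real \<Rightarrow> complex" where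
  "Pw f w x = exp (w * complex_of_real (ln (deriv f x)))"

lemma cfd_deriv: "diffeo_lift f \<Longrightarrow> (cfd f n has_vector_derivative cfd f (Suc n) x) (at x)"
  unfolding cfd_def[abs_def] by (rule has_vector_derivative_of_real) (rule fd_deriv)

lemma V_eq: "deriv f = fd f 1" by (simp add: fd_def)

lemma iV_deriv:
  assumes "diffeo_lift f"
  shows "(iV f has_vector_derivative - (cfd f 2 x * iV f x * iV f x)) (at x)"
proof -
  have p: "fd f 1 x \<noteq> 0" using V_pos[OF assms, of x] by (simp add: V_eq)
  have "((\<lambda>x. 1 / fd f 1 x) has_real_derivative - (fd f 2 x / (fd f 1 x)^2)) (at x)"
    using fd_deriv[OF assms, of 1 x] p
    by (auto intro!: derivative_eq_intros simp: numeral_2_eq_2 power2_eq_square)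
  from has_vector_derivative_of_real[OF this]
  have "(iV f has_vector_derivative of_real (- (fd f 2 x / (fd f 1 x)^2))) (at x)"
    unfolding iV_def[abs_def] V_eq .
  then show ?thesis
    by (rule has_vector_derivative_eq_rhs) (simp add: cfd_def iV_def V_eq power2_eq_square)
qed

lemma Pw_deriv:
  assumes "diffeo_lift f"
  shows "(Pw f w has_vector_derivative (w * cfd f 2 x * iV f x * Pw f w x)) (at x)"
proof -
  have p: "fd f 1 x > 0" using V_pos[OF assms, of x] by (simp add: V_eq)
  have "((\<lambda>x. ln (fd f 1 x)) has_real_derivative (fd f 2 x / fd f 1 x)) (at x)"
    using fd_deriv[OF assms, of 1 x] p
    by (auto intro!: derivative_eq_intros simp: numeral_2_eq_2)
  from has_vector_derivative_of_real[OF this]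
  have "((\<lambda>x. w * complex_of_real (ln (fd f 1 x))) has_vector_derivative w * of_real (fd f 2 x / fd f 1 x)) (at x)"
    by (rule has_vector_derivative_eq_rhs[OF has_vector_derivative_mult[OF has_vector_derivative_const]]) simp
  from field_vector_diff_chain_at[OF this DERIV_exp]
  show ?thesis unfolding Pw_def[abs_def] cfd_def iV_def V_eq o_def
    by (simp add: divide_inverse ac_simps)
qed

inductive_set SA :: "(real \<Rightarrow> real) \<Rightarrow> (real \<Rightarrow> complex) set" for f where
  SA_const: "(\<lambda>x. c) \<in> SA f"
| SA_fd: "cfd f n \<in> SA f"
| SA_iV: "iV f \<in> SA f"
| SA_Pw: "Pw f w \<in> SA f"
| SA_add: "u \<in> SA f \<Longrightarrow> v \<in> SA f \<Longrightarrow> (\<lambda>x. u x + v x) \<in> SA f"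
| SA_mult: "u \<in> SA f \<Longrightarrow> v \<in> SA f \<Longrightarrow> (\<lambda>x. u x * v x) \<in> SA f"

lemma SA_deriv:
  assumes "diffeo_lift f" "u \<in> SA f"
  shows "\<exists>u'\<in>SA f. \<forall>x. (u has_vector_derivative u' x) (at x)"
  using assms(2)
proof induction
  case (SA_const c)
  show ?case by (rule bexI[of _ "\<lambda>x. 0"]) (auto intro: SA.intros)
next
  case (SA_fd n)
  show ?case by (rule bexI[of _ "cfd f (Suc n)"]) (auto intro: SA.intros cfd_deriv[OF assms(1)])
next
  case SA_iV
  show ?case
  proof (rule bexI)
    show "(\<lambda>x. (-1) * (cfd f 2 x * iV f x * iV f x)) \<in> SA f" by (intro SA.intros)
  qed (use iV_deriv[OF assms(1)] in auto)
next
  case (SA_Pw w)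
  show ?case
  proof (rule bexI)
    show "(\<lambda>x. w * cfd f 2 x * iV f x * Pw f w x) \<in> SA f" by (intro SA.intros)
  qed (use Pw_deriv[OF assms(1)] in auto)
next
  case (SA_add u v)
  then obtain u' v' where "u' \<in> SA f" "v' \<in> SA f" "\<forall>x. (u has_vector_derivative u' x) (at x)"
     "\<forall>x. (v has_vector_derivative v' x) (at x)" by blast
  then show ?case
    by (intro bexI[of _ "\<lambda>x. u' x + v' x"]) (auto intro!: SA.intros derivative_intros)
next
  case (SA_mult u v)
  then obtain u' v' where "u' \<in> SA f" "v' \<in> SA f" "\<forall>x. (u has_vector_derivative u' x) (at x)"
     "\<forall>x. (v has_vector_derivative v' x) (at x)" by blast
  then show ?case
    using SA_mult.hyps by (intro bexI[of _ "\<lambda>x. u x * v' x + u' x * v x"]) (auto intro!: SA.intros derivative_intros)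
qed

lemma SA_Dv:
  assumes "diffeo_lift f" "u \<in> SA f"
  shows "Dv u \<in> SA f" "(u has_vector_derivative Dv u x) (at x)"
proof -
  obtain u' where u': "u' \<in> SA f" "\<forall>x. (u has_vector_derivative u' x) (at x)"
    using SA_deriv[OF assms] by blast
  have "Dv u = u'" unfolding Dv_def using u' vector_derivative_at by fastforce
  then show "Dv u \<in> SA f" "(u has_vector_derivative Dv u x) (at x)" using u' by auto
qed



primrec qq :: "(real \<Rightarrow> real) \<Rightarrow> complex \<Rightarrow> nat \<Rightarrow> nat \<Rightarrow> real \<Rightarrow> complex" where
  "qq f l 0 j = (if j = 0 then Pw f l else (\<lambda>x. 0))"
| "qq f l (Suc i) j = (\<lambda>x. Dv (qq f l i j) x + (if j = 0 then 0 else cfd f 1 x * qq f l i (j - 1) x))"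

lemma Dv_zero: "Dv (\<lambda>x. 0) = (\<lambda>x. 0)"
  by (simp add: Dv_def)

lemma Dv_at: "(u has_vector_derivative u') (at x) \<Longrightarrow> Dv u x = u'"
  by (simp add: Dv_def vector_derivative_at)

lemma fd_Suc0: "fd f (Suc 0) = deriv f" by (simp add: fd_def)

lemma qq_SA: assumes "diffeo_lift f" shows "qq f l i j \<in> SA f"
proof (induction i arbitrary: j)
  case 0 then show ?case by (auto intro: SA.intros)
next
  case (Suc i)
  show ?case
  proof (cases j)
    case 0
    then show ?thesis using SA_Dv(1)[OF assms Suc.IH] by simp
  next
    case (Suc j')
    then show ?thesis using SA_Dv(1)[OF assms Suc.IH] Suc.IH
      by (auto intro!: SA.intros)
  qed
qed

lemma qq_zero: "i < j \<Longrightarrow> qq f l i j = (\<lambda>x. 0)"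
proof (induction i arbitrary: j)
  case 0 then show ?case by simp
next
  case (Suc i)
  then have "qq f l i j = (\<lambda>x. 0)" "qq f l i (j - 1) = (\<lambda>x. 0)" by auto
  then show ?case using Suc.prems by (simp add: Dv_zero)
qed

definition ee :: "(real \<Rightarrow> real) \<Rightarrow> complex \<Rightarrow> real \<Rightarrow> complex" where
  "ee f s x = exp (s * complex_of_real (f x))"

lemma ee_deriv:
  assumes "diffeo_lift f"
  shows "(ee f s has_vector_derivative (s * cfd f 1 x * ee f s x)) (at x)"
proof -
  have "((\<lambda>x. s * complex_of_real (f x)) has_vector_derivative s * cfd f 1 x) (at x)"
    by (rule has_vector_derivative_eq_rhs[OF has_vector_derivative_mult[OF has_vector_derivative_const
          has_vector_derivative_of_real[OF f_deriv[OF assms]]]]) (simp add: cfd_def fd_Suc0)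
  from field_vector_diff_chain_at[OF this DERIV_exp]
  show ?thesis unfolding ee_def[abs_def] o_def by simp
qed

lemma Dpsi:
  assumes "diffeo_lift f"
  shows "(Dv ^^ i) (\<lambda>x. Pw f l x * ee f s x) = (\<lambda>x. ee f s x * (\<Sum>j\<le>i. qq f l i j x * s ^ j))"
proof (induction i)
  case 0
  then show ?case by (simp add: mult.commute)
next
  case (Suc i)
  have "(Dv ^^ Suc i) (\<lambda>x. Pw f l x * ee f s x) = Dv (\<lambda>x. ee f s x * (\<Sum>j\<le>i. qq f l i j x * s ^ j))"
    using Suc by simp
  also have "\<dots> = (\<lambda>x. ee f s x * (\<Sum>j\<le>Suc i. qq f l (Suc i) j x * s ^ j))"
  proof
    fix x
    have d: "((\<lambda>x. ee f s x * (\<Sum>j\<le>i. qq f l i j x * s ^ j)) has_vector_derivative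
        (ee f s x * (\<Sum>j\<le>i. Dv (qq f l i j) x * s ^ j) + (s * cfd f 1 x * ee f s x) * (\<Sum>j\<le>i. qq f l i j x * s ^ j))) (at x)"
      by (rule has_vector_derivative_eq_rhs)
         (rule derivative_eq_intros ee_deriv[OF assms] SA_Dv(2)[OF assms qq_SA[OF assms]] refl | simp)+
    have s1: "(\<Sum>j\<le>Suc i. Dv (qq f l i j) x * s ^ j) = (\<Sum>j\<le>i. Dv (qq f l i j) x * s ^ j)"
      using qq_zero[of i "Suc i" f l] by (simp add: Dv_zero)
    have s2: "(\<Sum>j\<le>Suc i. (if j = 0 then 0 else cfd f 1 x * qq f l i (j - 1) x) * s ^ j)
        = (\<Sum>j\<le>i. cfd f 1 x * qq f l i j x * s ^ Suc j)"
      by (subst sum.atMost_Suc_shift) simp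
    have "(\<Sum>j\<le>Suc i. qq f l (Suc i) j x * s ^ j) = (\<Sum>j\<le>Suc i. Dv (qq f l i j) x * s ^ j)
        + (\<Sum>j\<le>Suc i. (if j = 0 then 0 else cfd f 1 x * qq f l i (j - 1) x) * s ^ j)"
      by (simp add: distrib_right sum.distrib)
    also have "\<dots> = (\<Sum>j\<le>i. Dv (qq f l i j) x * s ^ j) + s * cfd f 1 x * (\<Sum>j\<le>i. qq f l i j x * s ^ j)"
      unfolding s1 s2 by (simp add: sum_distrib_left ac_simps)
    finally have "ee f s x * (\<Sum>j\<le>Suc i. qq f l (Suc i) j x * s ^ j) =
        ee f s x * (\<Sum>j\<le>i. Dv (qq f l i j) x * s ^ j) + (s * cfd f 1 x * ee f s x) * (\<Sum>j\<le>i. qq f l i j x * s ^ j)"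
      by (simp add: algebra_simps)
    then show "Dv (\<lambda>x. ee f s x * (\<Sum>j\<le>i. qq f l i j x * s ^ j)) x = ee f s x * (\<Sum>j\<le>Suc i. qq f l (Suc i) j x * s ^ j)"
      unfolding Dv_at[OF d] by simp
  qed
  finally show ?case .
qed



lemma poly_coeffs_zero:
  fixes c :: "nat \<Rightarrow> complex" and z :: "nat \<Rightarrow> complex"
  assumes h: "\<And>n. (\<Sum>j\<le>k. c j * (z n) ^ j) = 0" and inj: "inj z" and j: "j \<le> k"
  shows "c j = 0"
proof -
  define p where "p = (\<Sum>j\<le>k. monom (c j) j)"
  have ev: "poly p (z n) = 0" for n
    using h[of n] by (simp add: p_def poly_sum poly_monom)
  have "p = 0"
  proof (rule ccontr)
    assume "p \<noteq> 0"
    then have "finite {x. poly p x = 0}" by (rule poly_roots_finite)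
    moreover have "range z \<subseteq> {x. poly p x = 0}" using ev by auto
    ultimately have "finite (range z)" by (rule finite_subset[rotated])
    then show False using range_inj_infinite[OF inj] by simp
  qed
  then have "coeff p j = 0" by simp
  moreover have "coeff p j = c j"
    using j by (simp add: p_def coeff_sum)
  ultimately show ?thesis by simp
qed

definition zz :: "nat \<Rightarrow> complex" where
  "zz n = \<i> * (of_nat n * (of_real pi * 2))"

lemma zz_inj: "inj zz"
  by (rule injI) (simp add: zz_def)

lemma exp_lin_deriv:
  "((\<lambda>y. c * exp (s * complex_of_real y)) has_vector_derivative (c * s * exp (s * complex_of_real y))) (at y)"
proof -
  have "((\<lambda>y. s * complex_of_real y) has_vector_derivative s) (at y)"
    by (rule has_vector_derivative_eq_rhs[OF has_vector_derivative_mult[OF has_vector_derivative_const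
          has_vector_derivative_of_real[OF DERIV_ident]]]) simp
  from field_vector_diff_chain_at[OF this DERIV_exp]
  have "((\<lambda>y. exp (s * complex_of_real y)) has_vector_derivative (s * exp (s * complex_of_real y))) (at y)"
    by (simp add: o_def)
  from has_vector_derivative_mult[OF has_vector_derivative_const this, of c]
  show ?thesis by (simp add: ac_simps)
qed

lemma Dv_exp_lin: "(Dv ^^ i) (\<lambda>y. exp (s * complex_of_real y)) = (\<lambda>y. s ^ i * exp (s * complex_of_real y))"
proof (induction i)
  case (Suc i)
  show ?case using Suc by (auto simp: Dv_at[OF exp_lin_deriv])
qed simp

lemma smooth_exp: "smooth_per (\<lambda>y. exp (zz n * complex_of_real y))"
  unfolding smooth_per_def
proof (intro conjI allI)
  fix i x
  show "(Dv ^^ i) (\<lambda>y. exp (zz n * complex_of_real y)) differentiable at x"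
    unfolding Dv_exp_lin using exp_lin_deriv by (rule differentiableI_vector)
next
  fix x
  have "exp (zz n * complex_of_real (x + 1)) = exp (zz n * complex_of_real x + \<i> * (of_int (int n) * (of_real pi * 2)))"
    by (simp add: zz_def algebra_simps)
  also have "\<dots> = exp (zz n * complex_of_real x)" by (rule exp_plus_2pin)
  finally show "exp (zz n * complex_of_real (x + 1)) = exp (zz n * complex_of_real x)" .
qed

lemma powr_Pw: "diffeo_lift f \<Longrightarrow> complex_of_real (deriv f x) powr w = Pw f w x"
  using V_pos[of f x] by (simp add: powr_def Pw_def Ln_of_real)

lemma inv_deriv_eq: "diffeo_lift f \<Longrightarrow> deriv (inv f) y = 1 / deriv f (inv f y)"
  using inv_deriv DERIV_imp_deriv by blast

lemma powr_inv_Pw: assumes f: "diffeo_lift f" shows "complex_of_real (deriv (inv f) y) powr w = Pw f (-w) (inv f y)"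
proof -
  have r: "0 < 1 / deriv f (inv f y)" using V_pos[OF f, of "inv f y"] by simp
  have "complex_of_real (deriv (inv f) y) powr w = exp (w * of_real (ln (1 / deriv f (inv f y))))"
    unfolding inv_deriv_eq[OF f] powr_def using r by (simp add: Ln_of_real[OF r] del: of_real_divide)
  also have "\<dots> = Pw f (-w) (inv f y)"
    using V_pos[OF f, of "inv f y"] by (simp add: Pw_def ln_div)
  finally show ?thesis .
qed

lemma coeff_formula:
  assumes f: "diffeo_lift f" and k: "j \<le> k"
    and H: "\<forall>\<phi>. smooth_per \<phi> \<longrightarrow>
           diffop k b \<phi> = rho_dens m (inv f) (diffop k a (rho_dens l f \<phi>))"
  shows "b j y = Pw f (-m) (inv f y) * (\<Sum>i\<le>k. a i (inv f y) * qq f l i j (inv f y))"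
proof -
  define x where "x = inv f y"
  define M where "M = Pw f (-m) x"
  have "(\<Sum>j\<le>k. (b j y - M * (\<Sum>i\<le>k. a i x * qq f l i j x)) * (zz n) ^ j) = 0" for n
  proof -
    define s where "s = zz n"
    define \<phi> where "\<phi> = (\<lambda>y. exp (s * complex_of_real y))"
    have sm: "smooth_per \<phi>" unfolding \<phi>_def s_def by (rule smooth_exp)
    have r: "rho_dens l f \<phi> = (\<lambda>x. Pw f l x * ee f s x)"
      by (simp add: rho_dens_def \<phi>_def ee_def powr_Pw[OF f])
    have "diffop k b \<phi> y = diffop k a (rho_dens l f \<phi>) x * M"
      using H sm by (simp add: rho_dens_def powr_inv_Pw[OF f] x_def M_def mult.commute)
    then have "(\<Sum>i\<le>k. b i y * (s ^ i * exp (s * complex_of_real y))) =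
       (\<Sum>i\<le>k. a i x * (ee f s x * (\<Sum>j\<le>i. qq f l i j x * s ^ j))) * M"
      unfolding diffop_def r Dpsi[OF f] by (simp add: \<phi>_def Dv_exp_lin)
    moreover have "ee f s x = exp (s * complex_of_real y)"
      by (simp add: ee_def x_def f_inv_f[OF f])
    ultimately have "exp (s * complex_of_real y) * (\<Sum>i\<le>k. b i y * s ^ i) =
       exp (s * complex_of_real y) * ((\<Sum>i\<le>k. a i x * (\<Sum>j\<le>i. qq f l i j x * s ^ j)) * M)"
      by (simp add: sum_distrib_left sum_distrib_right ac_simps)
    then have e1: "(\<Sum>i\<le>k. b i y * s ^ i) = (\<Sum>i\<le>k. a i x * (\<Sum>j\<le>i. qq f l i j x * s ^ j)) * M"
      by simp
    have "(\<Sum>i\<le>k. a i x * (\<Sum>j\<le>i. qq f l i j x * s ^ j)) = (\<Sum>i\<le>k. a i x * (\<Sum>j\<le>k. qq f l i j x * s ^ j))"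
    proof (rule sum.cong[OF refl])
      fix i assume "i \<in> {..k}"
      then have "{..k} = {..i} \<union> {i<..k}" "{..i} \<inter> {i<..k} = {}" by auto
      moreover have "(\<Sum>j\<in>{i<..k}. qq f l i j x * s ^ j) = 0"
        by (rule sum.neutral) (simp add: qq_zero)
      ultimately show "a i x * (\<Sum>j\<le>i. qq f l i j x * s ^ j) = a i x * (\<Sum>j\<le>k. qq f l i j x * s ^ j)"
        by (simp add: sum.union_disjoint)
    qed
    also have "\<dots> = (\<Sum>j\<le>k. (\<Sum>i\<le>k. a i x * qq f l i j x) * s ^ j)"
      unfolding sum_distrib_left sum_distrib_right
      by (subst sum.swap) (simp add: ac_simps)
    finally have e2: "(\<Sum>i\<le>k. b i y * s ^ i) = (\<Sum>j\<le>k. (\<Sum>i\<le>k. a i x * qq f l i j x) * s ^ j) * M"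
      using e1 by simp
    have "(\<Sum>j\<le>k. (b j y - M * (\<Sum>i\<le>k. a i x * qq f l i j x)) * s ^ j) =
       (\<Sum>j\<le>k. b j y * s ^ j) - (\<Sum>j\<le>k. (\<Sum>i\<le>k. a i x * qq f l i j x) * s ^ j) * M"
      by (simp add: left_diff_distrib sum_subtractf sum_distrib_right sum_distrib_left algebra_simps)
    then show ?thesis using e2 by (simp add: s_def)
  qed
  from poly_coeffs_zero[OF this zz_inj k]
  show ?thesis by (simp add: x_def M_def)
qed



definition uu :: "(real \<Rightarrow> real) \<Rightarrow> real \<Rightarrow> complex" where
  "uu f x = cfd f 2 x * iV f x"
definition tt :: "(real \<Rightarrow> real) \<Rightarrow> real \<Rightarrow> complex" where
  "tt f x = cfd f 3 x * iV f x"

definition A1 :: "complex \<Rightarrow> nat \<Rightarrow> complex" where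
  "A1 l i = (of_nat i + 1) * l + (of_nat i + 1) * of_nat i / 2"

definition A2 :: "complex \<Rightarrow> nat \<Rightarrow> complex \<Rightarrow> complex \<Rightarrow> complex" where
  "A2 l i u t = (let n = (of_nat i :: complex) in
      (n+2)*(n+1)/2 * l * (t + (l - 1) * u^2) + (n+2)*(n+1)*n/2 * l * u^2
      + (n+2)*(n+1)*n*(n-1)/8 * u^2 + (n+2)*(n+1)*n/6 * t)"

lemma iV_V: "diffeo_lift f \<Longrightarrow> iV f x * cfd f 1 x = 1"
  using V_pos[of f x] by (simp add: iV_def cfd_def fd_def)

lemma Pw_Suc: "diffeo_lift f \<Longrightarrow> Pw f (w + 1) x = cfd f 1 x * Pw f w x"
  using V_pos[of f x]
  by (simp add: Pw_def cfd_def fd_def distrib_right exp_add exp_of_real mult.commute)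

lemma Pw_deriv':
  "diffeo_lift f \<Longrightarrow> (Pw f w has_vector_derivative w * uu f x * Pw f w x) (at x)"
  using Pw_deriv[of f w x] by (simp add: uu_def ac_simps)

lemma cfd2_deriv: "diffeo_lift f \<Longrightarrow> (cfd f 2 has_vector_derivative cfd f 3 x) (at x)"
  using cfd_deriv[of f 2 x] by (simp add: numeral_2_eq_2 numeral_3_eq_3)

lemma uu_deriv:
  assumes f: "diffeo_lift f"
  shows "(uu f has_vector_derivative tt f x - (uu f x)^2) (at x)"
proof -
  have "((\<lambda>x. cfd f 2 x * iV f x) has_vector_derivative
        cfd f 2 x * (- (cfd f 2 x * iV f x * iV f x)) + cfd f 3 x * iV f x) (at x)"
    by (rule has_vector_derivative_mult[OF cfd2_deriv[OF f] iV_deriv[OF f]])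
  then show ?thesis unfolding uu_def[abs_def] tt_def
    by (rule has_vector_derivative_eq_rhs) (simp add: power2_eq_square algebra_simps)
qed

lemma Pw_SA: "Pw f w \<in> SA f" by (rule SA_Pw)

lemma qq_diag:
  assumes f: "diffeo_lift f"
  shows "qq f l i i = Pw f (l + of_nat i)"
proof (induction i)
  case 0 then show ?case by simp
next
  case (Suc i)
  have "qq f l (Suc i) (Suc i) = (\<lambda>x. cfd f 1 x * Pw f (l + of_nat i) x)"
    using qq_zero[of i "Suc i" f l] Suc by (simp add: Dv_zero)
  also have "\<dots> = Pw f (l + of_nat (Suc i))"
  proof
    fix x
    have "l + of_nat (Suc i) = (l + of_nat i) + 1" by simp
    then show "cfd f 1 x * Pw f (l + of_nat i) x = Pw f (l + of_nat (Suc i)) x"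
      by (simp only: Pw_Suc[OF f])
  qed
  finally show ?case .
qed

lemma qq_sub1:
  assumes f: "diffeo_lift f"
  shows "qq f l (Suc i) i = (\<lambda>x. Pw f (l + of_nat i) x * uu f x * A1 l i)"
proof (induction i)
  case 0
  have "qq f l (Suc 0) 0 = Dv (Pw f l)" by (simp add: fun_eq_iff)
  also have "\<dots> = (\<lambda>x. l * uu f x * Pw f l x)"
    using Dv_at[OF Pw_deriv'[OF f]] by auto
  finally show ?case by (simp add: A1_def ac_simps)
next
  case (Suc i)
  have "qq f l (Suc (Suc i)) (Suc i) = (\<lambda>x. Dv (Pw f (l + of_nat (Suc i))) x + cfd f 1 x * qq f l (Suc i) i x)"
    using qq_diag[OF f, of l "Suc i"] by simp
  also have "\<dots> = (\<lambda>x. (l + of_nat (Suc i)) * uu f x * Pw f (l + of_nat (Suc i)) x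
                    + Pw f (l + of_nat (Suc i)) x * uu f x * A1 l i)"
    unfolding Suc using Dv_at[OF Pw_deriv'[OF f]] Pw_Suc[OF f, of "l + of_nat i"]
    by (auto simp: add.assoc ac_simps)
  also have "\<dots> = (\<lambda>x. Pw f (l + of_nat (Suc i)) x * uu f x * A1 l (Suc i))"
    by (rule ext) (simp add: A1_def field_simps)
  finally show ?case .
qed

lemma Puc_deriv:
  assumes f: "diffeo_lift f"
  shows "((\<lambda>x. Pw f w x * uu f x * c) has_vector_derivative
          (Pw f w x * (c * ((w - 1) * (uu f x)^2 + tt f x)))) (at x)"
  by (rule has_vector_derivative_eq_rhs)
     (rule derivative_eq_intros Pw_deriv'[OF f] uu_deriv[OF f] refl | simp add: power2_eq_square algebra_simps)+

lemma A2_rec: "A2 l (Suc i) u t = A2 l i u t + A1 l (Suc i) * ((l + of_nat i) * u^2 + t)"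
  by (simp add: A2_def A1_def Let_def field_simps)

lemma qq_sub2:
  assumes f: "diffeo_lift f"
  shows "qq f l (Suc (Suc i)) i = (\<lambda>x. Pw f (l + of_nat i) x * A2 l i (uu f x) (tt f x))"
proof (induction i)
  case 0
  have "qq f l (Suc (Suc 0)) 0 = Dv (qq f l (Suc 0) 0)" by (simp add: fun_eq_iff)
  also have "\<dots> = Dv (\<lambda>x. Pw f l x * uu f x * A1 l 0)"
    using qq_sub1[OF f, of l 0] by simp
  also have "\<dots> = (\<lambda>x. Pw f l x * (A1 l 0 * ((l - 1) * (uu f x)^2 + tt f x)))"
    using Dv_at[OF Puc_deriv[OF f]] by auto
  also have "\<dots> = (\<lambda>x. Pw f (l + of_nat 0) x * A2 l 0 (uu f x) (tt f x))"
    by (rule ext) (simp add: A1_def A2_def algebra_simps)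
  finally show ?case .
next
  case (Suc i)
  have "qq f l (Suc (Suc (Suc i))) (Suc i) = (\<lambda>x. Dv (qq f l (Suc (Suc i)) (Suc i)) x + cfd f 1 x * qq f l (Suc (Suc i)) i x)"
    by simp
  also have "\<dots> = (\<lambda>x. Dv (\<lambda>x. Pw f (l + of_nat (Suc i)) x * uu f x * A1 l (Suc i)) x
                    + cfd f 1 x * (Pw f (l + of_nat i) x * A2 l i (uu f x) (tt f x)))"
    unfolding Suc qq_sub1[OF f] ..
  also have "\<dots> = (\<lambda>x. Pw f (l + of_nat (Suc i)) x * (A1 l (Suc i) * ((l + of_nat (Suc i) - 1) * (uu f x)^2 + tt f x))
                    + Pw f (l + of_nat (Suc i)) x * A2 l i (uu f x) (tt f x))"
  proof
    fix x
    have "l + of_nat (Suc i) = (l + of_nat i) + 1" by simp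
    then have "Pw f (l + of_nat (Suc i)) x = cfd f 1 x * Pw f (l + of_nat i) x"
      by (simp only: Pw_Suc[OF f])
    then show "Dv (\<lambda>x. Pw f (l + of_nat (Suc i)) x * uu f x * A1 l (Suc i)) x
                    + cfd f 1 x * (Pw f (l + of_nat i) x * A2 l i (uu f x) (tt f x)) =
          Pw f (l + of_nat (Suc i)) x * (A1 l (Suc i) * ((l + of_nat (Suc i) - 1) * (uu f x)^2 + tt f x))
                    + Pw f (l + of_nat (Suc i)) x * A2 l i (uu f x) (tt f x)"
      unfolding Dv_at[OF Puc_deriv[OF f]] by simp
  qed
  also have "\<dots> = (\<lambda>x. Pw f (l + of_nat (Suc i)) x * A2 l (Suc i) (uu f x) (tt f x))"
    by (rule ext) (simp add: A2_rec algebra_simps)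
  finally show ?case .
qed



lemma decomp:
  fixes a2 a1 a0 w A1p A1K A2t A2u u t A Ap App B Bp C :: complex
  shows "a2 * ((w+1) * u * ((w+2) * u * A + Ap) + (w+2) * ((t - u^2) * A + u * Ap) + App)
       + a1 * ((w+1) * u * (B + A * u * A1p) + Bp + A1p * ((t - u^2) * A + u * Ap))
       + a0 * (C + B * u * A1K + A * (A2t * t + A2u * u^2))
       - (a2 * App + a1 * Bp + a0 * C)
     = u * Ap * (a2 * (2*w+3) + a1 * A1p) + u * B * (a1 * (w+1) + a0 * A1K)
       + t * A * (a2 * (w+2) + a1 * A1p + a0 * A2t)
       + u^2 * A * (a2 * ((w+1)*(w+2) - (w+2)) + a1 * (w+1) * A1p - a1 * A1p + a0 * A2u)"
  by (simp add: algebra_simps power2_eq_square)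

definition "cnd l m n = (l + (n + 2 - 2) / 3) * (m - (n + 2 + 1) / 3) + (n + 2 + 1) * (n + 2 - 2) / (36::complex)"
definition "al2 l n = 2/3 * (n+2) * (n+2 - 1) * (n+2 + 3*l - 2)^2"
definition "al1 l n = 2 * (n+2 - 1) * (n+2 + 3*l - 2) * (2 - 2*l - (n+2::complex))"
definition "al0 l n = 3*(n+2)^2 + 12*l*(n+2) + 12*l^2 - 11*(n+2) - 24*l + (10::complex)"
definition "a1p l n = (n+2) * l + (n+2) * (n+1) / (2::complex)"
definition "a1k l n = (n+1) * l + (n+1) * n / (2::complex)"
definition "a2t l n = (n+2)*(n+1)/2 * l + (n+2)*(n+1)*n/(6::complex)"
definition "a2u l n = (n+2)*(n+1)/2 * l * (l - 1) + (n+2)*(n+1)*n/2 * l + (n+2)*(n+1)*n*(n-1)/(8::complex)"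

lemma E1: "al2 l n * (2*(l-m+n)+3) + al1 l n * a1p l n = (-8*n - 12*n^2 - 4*n^3 - 24*l - 36*l*n - 12*l*n^2) * cnd l m n"
  unfolding al2_def al1_def a1p_def cnd_def by (simp add: field_simps) (simp add: algebra_simps power2_eq_square power3_eq_cube)
lemma E2: "al1 l n * ((l-m+n)+1) + al0 l n * a1k l n = (6*n + 6*n^2 + 12*l + 12*l*n) * cnd l m n"
  unfolding al0_def al1_def a1k_def cnd_def by (simp add: field_simps) (simp add: algebra_simps power2_eq_square power3_eq_cube)
lemma E3: "al2 l n * ((l-m+n)+2) + al1 l n * a1p l n + al0 l n * a2t l n = (-4*n - 6*n^2 - 2*n^3 - 12*l - 18*l*n - 6*l*n^2) * cnd l m n"
  unfolding al2_def al1_def al0_def a1p_def a2t_def cnd_def by (simp add: field_simps) (simp add: algebra_simps power2_eq_square power3_eq_cube)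
lemma E4: "al2 l n * (((l-m+n)+1)*((l-m+n)+2) - ((l-m+n)+2)) + al1 l n * ((l-m+n)+1) * a1p l n - al1 l n * a1p l n + al0 l n * a2u l n
   = (n + n^2/2 - n^3 - n^4/2 + 4*m*n + 6*m*n^2 + 2*m*n^3 - 4*l*n - 6*l*n^2 - 2*l*n^3 + 12*l*m + 18*l*m*n + 6*l*m*n^2) * cnd l m n"
  unfolding al2_def al1_def al0_def a1p_def a2u_def cnd_def by (simp add: field_simps) (simp add: algebra_simps eval_nat_numeral)


lemma key:
  fixes l m n u t A Ap App B Bp C :: complex
  assumes c: "cnd l m n = 0"
  defines "w \<equiv> l - m + n"
  shows "al2 l n * ((w+1) * u * ((w+1+1) * u * A + Ap) + ((w+1+1) * (t - u^2) * A + (w+1+1) * u * Ap + App))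
       + al1 l n * ((w+1) * u * (B + A * u * a1p l n) + (Bp + (Ap * u + A * (t - u^2)) * a1p l n))
       + al0 l n * (C + B * u * a1k l n + A * (a2t l n * t + a2u l n * u^2))
       = al2 l n * App + al1 l n * Bp + al0 l n * C"
proof -
  have "al2 l n * ((w+1) * u * ((w+1+1) * u * A + Ap) + ((w+1+1) * (t - u^2) * A + (w+1+1) * u * Ap + App))
       + al1 l n * ((w+1) * u * (B + A * u * a1p l n) + (Bp + (Ap * u + A * (t - u^2)) * a1p l n))
       + al0 l n * (C + B * u * a1k l n + A * (a2t l n * t + a2u l n * u^2))
       - (al2 l n * App + al1 l n * Bp + al0 l n * C)
     = u * Ap * (al2 l n * (2*w+3) + al1 l n * a1p l n) + u * B * (al1 l n * (w+1) + al0 l n * a1k l n)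
       + t * A * (al2 l n * (w+2) + al1 l n * a1p l n + al0 l n * a2t l n)
       + u^2 * A * (al2 l n * ((w+1)*(w+2) - (w+2)) + al1 l n * (w+1) * a1p l n - al1 l n * a1p l n + al0 l n * a2u l n)"
    by (simp add: algebra_simps power2_eq_square)
  also have "\<dots> = 0"
    unfolding w_def E1 E2 E3 E4 c by simp
  finally show ?thesis by simp
qed

lemma A1_Suc: "A1 l (Suc K) = a1p l (of_nat K)"
  by (simp add: A1_def a1p_def algebra_simps)
lemma A1_K: "A1 l K = a1k l (of_nat K)"
  by (simp add: A1_def a1k_def algebra_simps)
lemma A2_K: "A2 l K u t = a2t l (of_nat K) * t + a2u l (of_nat K) * u^2"
  by (simp add: A2_def a2t_def a2u_def Let_def field_simps)

lemma Dv_comp_inv: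
  assumes f: "diffeo_lift f" and d: "\<And>x. (B has_vector_derivative B' x) (at x)"
  shows "Dv (\<lambda>y. B (inv f y)) = (\<lambda>y. iV f (inv f y) * B' (inv f y))"
proof
  fix y
  have d1: "(inv f has_vector_derivative 1 / deriv f (inv f y)) (at y)"
    using inv_deriv[OF f, of y] by (simp add: has_real_derivative_iff_has_vector_derivative)
  from vector_diff_chain_at[OF d1 d[of "inv f y"]]
  have "((\<lambda>y. B (inv f y)) has_vector_derivative iV f (inv f y) * B' (inv f y)) (at y)"
    by (simp add: o_def scaleR_conv_of_real iV_def)
  then show "Dv (\<lambda>y. B (inv f y)) y = iV f (inv f y) * B' (inv f y)" by (rule Dv_at)
qed

lemma Dv_PG:
  assumes f: "diffeo_lift f" and d: "\<And>x. (G has_vector_derivative G' x) (at x)"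
  shows "Dv (\<lambda>y. Pw f (w+1) (inv f y) * G (inv f y)) =
         (\<lambda>y. Pw f w (inv f y) * ((w+1) * uu f (inv f y) * G (inv f y) + G' (inv f y)))"
proof -
  have dd: "((\<lambda>x. Pw f (w+1) x * G x) has_vector_derivative
      cfd f 1 x * (Pw f w x * ((w+1) * uu f x * G x + G' x))) (at x)" for x
  proof -
    have hp: "Pw f (w+1) x = cfd f 1 x * Pw f w x" by (rule Pw_Suc[OF f])
    show ?thesis
      apply (rule has_vector_derivative_eq_rhs)
       apply (rule derivative_eq_intros Pw_deriv'[OF f] d refl)+
      apply (simp only: hp)
      apply (simp add: algebra_simps)
      done
  qed
  show ?thesis
    unfolding Dv_comp_inv[OF f dd]
    using iV_V[OF f] by (simp add: mult.assoc[symmetric])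
qed

lemma smooth_d1: "smooth_per \<phi> \<Longrightarrow> (\<phi> has_vector_derivative Dv \<phi> x) (at x)"
  unfolding smooth_per_def Dv_def
  by (metis funpow_0 vector_derivative_works)

lemma smooth_d2: "smooth_per \<phi> \<Longrightarrow> (Dv \<phi> has_vector_derivative Dv (Dv \<phi>) x) (at x)"
proof -
  assume "smooth_per \<phi>"
  then have "(Dv ^^ 1) \<phi> differentiable at x" unfolding smooth_per_def by blast
  then show ?thesis by (simp add: vector_derivative_works Dv_def[of "Dv \<phi>"])
qed



lemma sum_top3: "(\<Sum>i\<le>Suc (Suc K). F i) = (\<Sum>i<K. F i) + F K + F (Suc K) + F (Suc (Suc K))"
  by (simp add: lessThan_Suc_atMost[symmetric])

lemma Pw_mult_eq: "a + b = c \<Longrightarrow> Pw f a x * Pw f b x = Pw f c x"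
  by (auto simp: Pw_def exp_add[symmetric] distrib_right)

lemma sum_lowzero: "(\<Sum>i<K. a i x * qq f l i (K + d) x) = 0"
  by (rule sum.neutral) (simp add: qq_zero)

theorem proposition4p1:
  fixes k :: nat and l m :: complex and f :: "real \<Rightarrow> real"
    and a b :: "nat \<Rightarrow> real \<Rightarrow> complex"
  assumes "k \<ge> 3"
    and "(l + (of_nat k - 2) / 3) * (m - (of_nat k + 1) / 3)
           + (of_nat k + 1) * (of_nat k - 2) / 36 = 0"
    and "diffeo_lift f"
    and "\<forall>i\<le>k. smooth_per (a i)"
    and "\<forall>i\<le>k. smooth_per (b i)"
    and "\<forall>\<phi>. smooth_per \<phi> \<longrightarrow>
           diffop k b \<phi> = rho_dens m (inv f) (diffop k a (rho_dens l f \<phi>))"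
  shows "Wop k l m b = rho_dens (m - l - of_nat k + 2) (inv f) (Wop k l m a)"
proof -
  note f = assms(3)
  obtain K where kK: "k = Suc (Suc K)"
    using assms(1) by (intro that[of "k - 2"]) simp
  define n where "n = (of_nat K :: complex)"
  define w where "w = l - m + n"
  have sa0: "smooth_per (a K)" and sa1: "smooth_per (a (Suc K))" and sa2: "smooth_per (a (Suc (Suc K)))"
    using assms(4) kK by auto
  have cf: "b j y = Pw f (-m) (inv f y) * (\<Sum>i\<le>Suc (Suc K). a i (inv f y) * qq f l i j (inv f y))"
    if "j \<le> Suc (Suc K)" for j y
    using coeff_formula[OF f _ assms(6)] that kK by simp
  have bK2: "b (Suc (Suc K)) = (\<lambda>y. Pw f (w+1+1) (inv f y) * a (Suc (Suc K)) (inv f y))"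
  proof
    fix y
    define x where "x = inv f y"
    have z: "(\<Sum>i<K. a i x * qq f l i (Suc (Suc K)) x) = 0"
      using sum_lowzero[where K=K and a=a and x=x and f=f and l=l and d=2] by simp
    have "b (Suc (Suc K)) y = Pw f (-m) x * (a (Suc (Suc K)) x * Pw f (l + of_nat (Suc (Suc K))) x)"
      unfolding cf[OF order_refl] sum_top3 x_def[symmetric] z
      by (simp del: qq.simps add: qq_zero qq_diag[OF f])
    also have "\<dots> = Pw f (w+1+1) x * a (Suc (Suc K)) x"
      using Pw_mult_eq[of "-m" "l + of_nat (Suc (Suc K))" "w+1+1" f x]
      by (simp add: w_def n_def algebra_simps)
    finally show "b (Suc (Suc K)) y = Pw f (w+1+1) (inv f y) * a (Suc (Suc K)) (inv f y)"
      by (simp add: x_def)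
  qed
  have bK1: "b (Suc K) = (\<lambda>y. Pw f (w+1) (inv f y) *
      (a (Suc K) (inv f y) + a (Suc (Suc K)) (inv f y) * uu f (inv f y) * A1 l (Suc K)))"
  proof
    fix y
    define x where "x = inv f y"
    have z: "(\<Sum>i<K. a i x * qq f l i (Suc K) x) = 0"
      using sum_lowzero[where K=K and a=a and x=x and f=f and l=l and d=1] by simp
    have "b (Suc K) y = Pw f (-m) x * (a (Suc K) x * Pw f (l + of_nat (Suc K)) x
          + a (Suc (Suc K)) x * (Pw f (l + of_nat (Suc K)) x * uu f x * A1 l (Suc K)))"
      unfolding cf[OF le_SucI[OF order_refl]] sum_top3 x_def[symmetric] z
      by (simp del: qq.simps add: qq_zero qq_diag[OF f] qq_sub1[OF f])
    also have "\<dots> = (Pw f (-m) x * Pw f (l + of_nat (Suc K)) x) *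
        (a (Suc K) x + a (Suc (Suc K)) x * uu f x * A1 l (Suc K))"
      by (simp add: algebra_simps)
    also have "\<dots> = Pw f (w+1) x * (a (Suc K) x + a (Suc (Suc K)) x * uu f x * A1 l (Suc K))"
      using Pw_mult_eq[of "-m" "l + of_nat (Suc K)" "w+1" f x]
      by (simp add: w_def n_def algebra_simps)
    finally show "b (Suc K) y = Pw f (w+1) (inv f y) *
      (a (Suc K) (inv f y) + a (Suc (Suc K)) (inv f y) * uu f (inv f y) * A1 l (Suc K))"
      by (simp add: x_def)
  qed
  have bK0: "b K = (\<lambda>y. Pw f w (inv f y) *
      (a K (inv f y) + a (Suc K) (inv f y) * uu f (inv f y) * A1 l K
       + a (Suc (Suc K)) (inv f y) * A2 l K (uu f (inv f y)) (tt f (inv f y))))"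
  proof
    fix y
    define x where "x = inv f y"
    have z: "(\<Sum>i<K. a i x * qq f l i K x) = 0"
      using sum_lowzero[where K=K and a=a and x=x and f=f and l=l and d=0] by simp
    have "b K y = Pw f (-m) x * (a K x * Pw f (l + of_nat K) x
          + a (Suc K) x * (Pw f (l + of_nat K) x * uu f x * A1 l K)
          + a (Suc (Suc K)) x * (Pw f (l + of_nat K) x * A2 l K (uu f x) (tt f x)))"
      unfolding cf[OF le_SucI[OF le_SucI[OF order_refl]]] sum_top3 x_def[symmetric] z
      by (simp del: qq.simps add: qq_diag[OF f] qq_sub1[OF f] qq_sub2[OF f])
    also have "\<dots> = (Pw f (-m) x * Pw f (l + of_nat K) x) *
        (a K x + a (Suc K) x * uu f x * A1 l K + a (Suc (Suc K)) x * A2 l K (uu f x) (tt f x))"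
      by (simp add: algebra_simps)
    also have "\<dots> = Pw f w x * (a K x + a (Suc K) x * uu f x * A1 l K + a (Suc (Suc K)) x * A2 l K (uu f x) (tt f x))"
      using Pw_mult_eq[of "-m" "l + of_nat K" "w" f x]
      by (simp add: w_def n_def algebra_simps)
    finally show "b K y = Pw f w (inv f y) *
      (a K (inv f y) + a (Suc K) (inv f y) * uu f (inv f y) * A1 l K
       + a (Suc (Suc K)) (inv f y) * A2 l K (uu f (inv f y)) (tt f (inv f y)))"
      by (simp add: x_def)
  qed
  have d2: "\<And>x. (a (Suc (Suc K)) has_vector_derivative Dv (a (Suc (Suc K))) x) (at x)"
    by (rule smooth_d1[OF sa2])
  have dd2: "\<And>x. (Dv (a (Suc (Suc K))) has_vector_derivative Dv (Dv (a (Suc (Suc K)))) x) (at x)"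
    by (rule smooth_d2[OF sa2])
  have d1: "\<And>x. (a (Suc K) has_vector_derivative Dv (a (Suc K)) x) (at x)"
    by (rule smooth_d1[OF sa1])
  have D2a: "Dv (b (Suc (Suc K))) = (\<lambda>y. Pw f (w+1) (inv f y) *
      ((w+1+1) * uu f (inv f y) * a (Suc (Suc K)) (inv f y) + Dv (a (Suc (Suc K))) (inv f y)))"
    unfolding bK2 by (rule Dv_PG[OF f d2])
  have G2d: "((\<lambda>x. (w+1+1) * uu f x * a (Suc (Suc K)) x + Dv (a (Suc (Suc K))) x) has_vector_derivative
      ((w+1+1) * (tt f x - (uu f x)^2) * a (Suc (Suc K)) x + (w+1+1) * uu f x * Dv (a (Suc (Suc K))) x
        + Dv (Dv (a (Suc (Suc K)))) x)) (at x)" for x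
    by (rule has_vector_derivative_eq_rhs)
       (rule derivative_eq_intros uu_deriv[OF f] d2 dd2 refl | simp add: algebra_simps)+
  have D2b: "Dv (Dv (b (Suc (Suc K)))) = (\<lambda>y. Pw f w (inv f y) *
      ((w+1) * uu f (inv f y) * ((w+1+1) * uu f (inv f y) * a (Suc (Suc K)) (inv f y) + Dv (a (Suc (Suc K))) (inv f y))
       + ((w+1+1) * (tt f (inv f y) - (uu f (inv f y))^2) * a (Suc (Suc K)) (inv f y)
          + (w+1+1) * uu f (inv f y) * Dv (a (Suc (Suc K))) (inv f y) + Dv (Dv (a (Suc (Suc K)))) (inv f y))))"
    unfolding D2a by (rule Dv_PG[OF f G2d])
  have G1d: "((\<lambda>x. a (Suc K) x + a (Suc (Suc K)) x * uu f x * A1 l (Suc K)) has_vector_derivative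
      (Dv (a (Suc K)) x + (Dv (a (Suc (Suc K))) x * uu f x + a (Suc (Suc K)) x * (tt f x - (uu f x)^2)) * A1 l (Suc K))) (at x)" for x
    by (rule has_vector_derivative_eq_rhs)
       (rule derivative_eq_intros uu_deriv[OF f] d2 d1 refl | simp add: algebra_simps)+
  have D1: "Dv (b (Suc K)) = (\<lambda>y. Pw f w (inv f y) *
      ((w+1) * uu f (inv f y) * (a (Suc K) (inv f y) + a (Suc (Suc K)) (inv f y) * uu f (inv f y) * A1 l (Suc K))
      + (Dv (a (Suc K)) (inv f y) + (Dv (a (Suc (Suc K))) (inv f y) * uu f (inv f y)
          + a (Suc (Suc K)) (inv f y) * (tt f (inv f y) - (uu f (inv f y))^2)) * A1 l (Suc K))))"
    unfolding bK1 by (rule Dv_PG[OF f G1d])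
  have kn: "(of_nat k :: complex) = n + 2" by (simp add: kK n_def)
  have cnd0: "cnd l m n = 0" using assms(2) unfolding kn cnd_def .
  show ?thesis
  proof
    fix y
    define x where "x = inv f y"
    have ex: "- (m - l - of_nat k + 2) = w" by (simp add: kn w_def)
    have "Wop k l m b y = al2 l n * (Pw f w x *
      ((w+1) * uu f x * ((w+1+1) * uu f x * a (Suc (Suc K)) x + Dv (a (Suc (Suc K))) x)
       + ((w+1+1) * (tt f x - (uu f x)^2) * a (Suc (Suc K)) x
          + (w+1+1) * uu f x * Dv (a (Suc (Suc K))) x + Dv (Dv (a (Suc (Suc K)))) x)))
      + al1 l n * (Pw f w x *
      ((w+1) * uu f x * (a (Suc K) x + a (Suc (Suc K)) x * uu f x * A1 l (Suc K))
      + (Dv (a (Suc K)) x + (Dv (a (Suc (Suc K))) x * uu f x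
          + a (Suc (Suc K)) x * (tt f x - (uu f x)^2)) * A1 l (Suc K))))
      + al0 l n * (Pw f w x *
      (a K x + a (Suc K) x * uu f x * A1 l K
       + a (Suc (Suc K)) x * A2 l K (uu f x) (tt f x)))"
      unfolding Wop_def Let_def kn al2_def al1_def al0_def
      by (simp add: kK D2b D1 bK0 x_def)
    also have "\<dots> = Pw f w x * (al2 l n * Dv (Dv (a (Suc (Suc K)))) x + al1 l n * Dv (a (Suc K)) x + al0 l n * a K x)"
    proof -
      have "al2 l n * ((w+1) * uu f x * ((w+1+1) * uu f x * a (Suc (Suc K)) x + Dv (a (Suc (Suc K))) x)
       + ((w+1+1) * (tt f x - (uu f x)^2) * a (Suc (Suc K)) x
          + (w+1+1) * uu f x * Dv (a (Suc (Suc K))) x + Dv (Dv (a (Suc (Suc K)))) x))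
      + al1 l n * ((w+1) * uu f x * (a (Suc K) x + a (Suc (Suc K)) x * uu f x * a1p l n)
      + (Dv (a (Suc K)) x + (Dv (a (Suc (Suc K))) x * uu f x
          + a (Suc (Suc K)) x * (tt f x - (uu f x)^2)) * a1p l n))
      + al0 l n * (a K x + a (Suc K) x * uu f x * a1k l n
       + a (Suc (Suc K)) x * (a2t l n * tt f x + a2u l n * (uu f x)^2))
      = al2 l n * Dv (Dv (a (Suc (Suc K)))) x + al1 l n * Dv (a (Suc K)) x + al0 l n * a K x"
        using key[OF cnd0, of "uu f x" "a (Suc (Suc K)) x" "Dv (a (Suc (Suc K))) x" "tt f x"
            "Dv (Dv (a (Suc (Suc K)))) x" "a (Suc K) x" "Dv (a (Suc K)) x" "a K x"]
        unfolding w_def .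
      then have eqP: "Pw f w x * (al2 l n * ((w+1) * uu f x * ((w+1+1) * uu f x * a (Suc (Suc K)) x + Dv (a (Suc (Suc K))) x)
       + ((w+1+1) * (tt f x - (uu f x)^2) * a (Suc (Suc K)) x
          + (w+1+1) * uu f x * Dv (a (Suc (Suc K))) x + Dv (Dv (a (Suc (Suc K)))) x))
      + al1 l n * ((w+1) * uu f x * (a (Suc K) x + a (Suc (Suc K)) x * uu f x * a1p l n)
      + (Dv (a (Suc K)) x + (Dv (a (Suc (Suc K))) x * uu f x
          + a (Suc (Suc K)) x * (tt f x - (uu f x)^2)) * a1p l n))
      + al0 l n * (a K x + a (Suc K) x * uu f x * a1k l n
       + a (Suc (Suc K)) x * (a2t l n * tt f x + a2u l n * (uu f x)^2)))
      = Pw f w x * (al2 l n * Dv (Dv (a (Suc (Suc K)))) x + al1 l n * Dv (a (Suc K)) x + al0 l n * a K x)"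
        by (rule arg_cong)
      show ?thesis
        unfolding A1_Suc A1_K[of l K] A2_K n_def[symmetric]
        by (rule trans[OF _ eqP]) (simp add: algebra_simps)
    qed
    also have "\<dots> = rho_dens (m - l - of_nat k + 2) (inv f) (Wop k l m a) y"
      unfolding rho_dens_def powr_inv_Pw[OF f] ex
      unfolding Wop_def Let_def kn al2_def al1_def al0_def
      by (simp add: kK x_def)
    finally show "Wop k l m b y = rho_dens (m - l - of_nat k + 2) (inv f) (Wop k l m a) y" .
  qed
qed


end
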